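(* Let $(\Gamma,\tau)$ be a $z$-oriented triangulation of a connected closed $2$-dimensional surface, and let $\Gamma_{\tau}$ be its transition digraph and $\mathcal{X}_{\tau}$ its Markov chain. Then: (1) for every vertex $v$ of $\Gamma_{\tau}$ there exists a closed directed walk of length $3$ in $\Gamma_{\tau}$ passing through $v$; (2) $\mathcal{X}_{\tau}$ is irreducible.
   Context: A triangulation $\Gamma$ of a connected closed surface $M$ (not necessarily orientable) is a closed $2$-cell embedding of a connected finite simple graph in $M$ all of whose faces are triangles. Two edges are adjacent if they are distinct and lie in a common face; two faces are adjacent if distinct and their intersection is an edge. A zigzag is a sequence of edges $(e_i)_{i\in\mathbb{N}}$ such that for every $i$: $e_i,e_{i+1}$ are adjacent, the faces containing $e_i,e_{i+1}$ and $e_{i+1},e_{i+2}$ are adjacent, and $e_i,e_{i+2}$ are disjoint; it is a cyclic sequence, equivalently a cyclic vertex sequence $v_1,\dots,v_n$ with $e_i=v_iv_{i+1}$, traversing $e_i$ from $v_i$ to $v_{i+1}$. $Z^{-1}$ denotes the reversed zigzag. A $z$-orientation $\tau$ is a set of zigzags containing exactly one of $Z,Z^{-1}$ for every zigzag $Z$. Every edge is traversed exactly twice in total by zigzags of $\tau$; it is of type I if the two traversals are in opposite directions, of type II if in the same direction (then it is regarded as directed that way). Each face either has two type I edges and one type II edge (type I face) or three type II edges forming a directed cycle (type II face). Transition digraph and chain: on vertex set $V=\{v_1,\dots,v_n\}$, let $d(v)$ be the number of type I edges at $v$ plus twice the number of type II edges directed out of $v$. Set $p_{ij}=1/d(v_i)$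 if $v_iv_j$ is an edge of type I, $p_{ij}=2/d(v_i)$ if $v_iv_j$ is a type II edge directed from $v_i$ to $v_j$, and $p_{ij}=0$ otherwise. $\Gamma_{\tau}$ is the digraph on $V$ with a directed edge $v_i\to v_j$ exactly when $p_{ij}>0$ (so each type I edge gives two opposite directed edges and each type II edge one directed edge), and $\mathcal{X}_{\tau}$ is the time-homogeneous Markov chain on $V$ with transition matrix $[p_{ij}]$. The length of a walk is the number of edges traversed, with multiplicity. *)

theory Defs
  imports Complex_Main
begin

text \<open>A triangulation of a connected closed surface: every face is a triangle of the graph,
  every edge lies in exactly two faces, the graph is connected, and the link of every
  vertex is a single cycle (the faces around v are connected through edges at v).\<close>

definition is_triangulation :: "'a set \<Rightarrow> 'a set set \<Rightarrow> 'a set set \<Rightarrow> bool" where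
  "is_triangulation V E F \<longleftrightarrow>
     finite V \<and> V \<noteq> {} \<and>
     (\<forall>e\<in>E. \<exists>x y. x \<in> V \<and> y \<in> V \<and> x \<noteq> y \<and> e = {x, y}) \<and>
     (\<forall>f\<in>F. \<exists>x y z. f = {x, y, z} \<and> x \<noteq> y \<and> y \<noteq> z \<and> x \<noteq> z \<and>
                   {x, y} \<in> E \<and> {y, z} \<in> E \<and> {x, z} \<in> E) \<and>
     (\<forall>e\<in>E. card {f\<in>F. e \<subseteq> f} = 2) \<and>
     (\<forall>x\<in>V. \<forall>y\<in>V. (\<lambda>a b. {a, b} \<in> E)\<^sup>*\<^sup>* x y) \<and>
     (\<forall>v\<in>V. (\<exists>f\<in>F. v \<in> f) \<and>
        (\<forall>f\<in>F. \<forall>g\<in>F. v \<in> f \<longrightarrow> v \<in> g \<longrightarrow>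
           (\<lambda>f' g'. f' \<in> F \<and> g' \<in> F \<and> v \<in> f' \<inter> g' \<and> f' \<inter> g' \<in> E)\<^sup>*\<^sup>* f g))"

definition adjacent_edges :: "'a set set \<Rightarrow> 'a set set \<Rightarrow> 'a set \<Rightarrow> 'a set \<Rightarrow> bool" where
  "adjacent_edges E F e e' \<longleftrightarrow> e \<in> E \<and> e' \<in> E \<and> e \<noteq> e' \<and> (\<exists>f\<in>F. e \<subseteq> f \<and> e' \<subseteq> f)"

definition adjacent_faces :: "'a set set \<Rightarrow> 'a set set \<Rightarrow> 'a set \<Rightarrow> 'a set \<Rightarrow> bool" where
  "adjacent_faces E F f g \<longleftrightarrow> f \<in> F \<and> g \<in> F \<and> f \<noteq> g \<and> f \<inter> g \<in> E"

text \<open>A zigzag given by its (bi-infinite) vertex sequence; edge i is {v i, v (i+1)},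
  traversed from v i to v (i+1). The face containing e_i and e_(i+1) is their union.\<close>

definition is_zigzag_seq :: "'a set set \<Rightarrow> 'a set set \<Rightarrow> (int \<Rightarrow> 'a) \<Rightarrow> bool" where
  "is_zigzag_seq E F v \<longleftrightarrow>
     (\<forall>i. let e = (\<lambda>j. {v j, v (j + 1)}) in
        adjacent_edges E F (e i) (e (i + 1)) \<and>
        adjacent_faces E F (e i \<union> e (i + 1)) (e (i + 1) \<union> e (i + 2)) \<and>
        e i \<inter> e (i + 2) = {})"

text \<open>A zigzag is a cyclic sequence: the class of a sequence under index shifts.\<close>

definition zclass :: "(int \<Rightarrow> 'a) \<Rightarrow> (int \<Rightarrow> 'a) set" where
  "zclass v = range (\<lambda>k::int. \<lambda>i. v (i + k))"

definition zigzags :: "'a set set \<Rightarrow> 'a set set \<Rightarrow> (int \<Rightarrow> 'a) set set" where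
  "zigzags E F = {zclass v | v. is_zigzag_seq E F v}"

definition zinv :: "(int \<Rightarrow> 'a) set \<Rightarrow> (int \<Rightarrow> 'a) set" where
  "zinv Z = (\<lambda>v i. v (- i)) ` Z"

definition z_orientation :: "'a set set \<Rightarrow> 'a set set \<Rightarrow> (int \<Rightarrow> 'a) set set \<Rightarrow> bool" where
  "z_orientation E F \<tau> \<longleftrightarrow> \<tau> \<subseteq> zigzags E F \<and>
     (\<forall>Z\<in>zigzags E F. (Z \<in> \<tau> \<or> zinv Z \<in> \<tau>) \<and> (Z \<in> \<tau> \<and> zinv Z \<in> \<tau> \<longrightarrow> Z = zinv Z))"

definition zper :: "(int \<Rightarrow> 'a) \<Rightarrow> nat" where
  "zper v = (LEAST p. p > 0 \<and> (\<forall>i. v (i + int p) = v i))"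

definition ztrav :: "(int \<Rightarrow> 'a) set \<Rightarrow> 'a \<Rightarrow> 'a \<Rightarrow> nat" where
  "ztrav Z x y = (let v = (SOME v. v \<in> Z) in
     card {i \<in> {0..<int (zper v)}. v i = x \<and> v (i + 1) = y})"

definition trav :: "(int \<Rightarrow> 'a) set set \<Rightarrow> 'a \<Rightarrow> 'a \<Rightarrow> nat" where
  "trav \<tau> x y = (\<Sum>Z\<in>\<tau>. ztrav Z x y)"

definition typeI :: "'a set set \<Rightarrow> (int \<Rightarrow> 'a) set set \<Rightarrow> 'a \<Rightarrow> 'a \<Rightarrow> bool" where
  "typeI E \<tau> x y \<longleftrightarrow> {x, y} \<in> E \<and> trav \<tau> x y > 0 \<and> trav \<tau> y x > 0"

definition typeII :: "'a set set \<Rightarrow> (int \<Rightarrow> 'a) set set \<Rightarrow> 'a \<Rightarrow> 'a \<Rightarrow> bool" where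
  "typeII E \<tau> x y \<longleftrightarrow> {x, y} \<in> E \<and> trav \<tau> x y > 0 \<and> trav \<tau> y x = 0"

definition tdeg :: "'a set set \<Rightarrow> (int \<Rightarrow> 'a) set set \<Rightarrow> 'a \<Rightarrow> nat" where
  "tdeg E \<tau> v = card {y. typeI E \<tau> v y} + 2 * card {y. typeII E \<tau> v y}"

definition tprob :: "'a set set \<Rightarrow> (int \<Rightarrow> 'a) set set \<Rightarrow> 'a \<Rightarrow> 'a \<Rightarrow> real" where
  "tprob E \<tau> x y =
     (if typeI E \<tau> x y then 1 / real (tdeg E \<tau> x)
      else if typeII E \<tau> x y then 2 / real (tdeg E \<tau> x) else 0)"

definition tarc :: "'a set set \<Rightarrow> (int \<Rightarrow> 'a) set set \<Rightarrow> 'a \<Rightarrow> 'a \<Rightarrow> bool" where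
  "tarc E \<tau> x y \<longleftrightarrow> tprob E \<tau> x y > 0"

fun mpow :: "'a set \<Rightarrow> ('a \<Rightarrow> 'a \<Rightarrow> real) \<Rightarrow> nat \<Rightarrow> 'a \<Rightarrow> 'a \<Rightarrow> real" where
  "mpow V P 0 x y = (if x = y then 1 else 0)"
| "mpow V P (Suc n) x y = (\<Sum>z\<in>V. mpow V P n x z * P z y)"

definition irreducible_chain :: "'a set \<Rightarrow> ('a \<Rightarrow> 'a \<Rightarrow> real) \<Rightarrow> bool" where
  "irreducible_chain V P \<longleftrightarrow> (\<forall>x\<in>V. \<forall>y\<in>V. \<exists>n. mpow V P n x y > 0)"

end

theory Submission
  imports Defs
begin


lemma triE: assumes "is_triangulation V E F"
  shows "\<forall>e\<in>E. \<exists>x y. x \<in> V \<and> y \<in> V \<and> x \<noteq> y \<and> e = {x, y}"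
  using assms unfolding is_triangulation_def by (elim conjE) assumption
lemma triF: assumes "is_triangulation V E F"
  shows "\<forall>f\<in>F. \<exists>x y z. f = {x, y, z} \<and> x \<noteq> y \<and> y \<noteq> z \<and> x \<noteq> z \<and>
                   {x, y} \<in> E \<and> {y, z} \<in> E \<and> {x, z} \<in> E"
  using assms unfolding is_triangulation_def by (elim conjE) assumption
lemma triC: assumes "is_triangulation V E F"
  shows "\<forall>e\<in>E. card {f\<in>F. e \<subseteq> f} = 2"
  using assms unfolding is_triangulation_def by (elim conjE) assumption
lemma triConn: assumes "is_triangulation V E F"
  shows "\<forall>x\<in>V. \<forall>y\<in>V. (\<lambda>a b. {a, b} \<in> E)\<^sup>*\<^sup>* x y"
  using assms unfolding is_triangulation_def by (elim conjE) assumption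
lemma triV: assumes "is_triangulation V E F" "v \<in> V"
  shows "\<exists>f\<in>F. v \<in> f"
  using assms unfolding is_triangulation_def by blast
lemma triFin: assumes "is_triangulation V E F"
  shows "finite V"
  using assms unfolding is_triangulation_def by (elim conjE) assumption

definition good4 :: "'a set set \<Rightarrow> 'a \<Rightarrow> 'a \<Rightarrow> 'a \<Rightarrow> 'a \<Rightarrow> bool" where
  "good4 F a b c d \<longleftrightarrow> {a,b,c} \<in> F \<and> {b,c,d} \<in> F \<and> a \<noteq> b \<and> b \<noteq> c \<and> a \<noteq> c
     \<and> d \<noteq> a \<and> d \<noteq> b \<and> d \<noteq> c"

lemma tri_E:
  assumes "is_triangulation V E F" "{a,b} \<in> E"
  shows "a \<in> V \<and> b \<in> V \<and> a \<noteq> b"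
proof -
  obtain x y where "x \<in> V" "y \<in> V" "x \<noteq> y" "{a,b} = {x,y}"
    using triE[OF assms(1)] assms(2) by blast
  then show ?thesis by (auto simp: doubleton_eq_iff)
qed

lemma tri_F:
  assumes "is_triangulation V E F" "{a,b,c} \<in> F" "a \<noteq> b" "b \<noteq> c" "a \<noteq> c"
  shows "{a,b} \<in> E \<and> {b,c} \<in> E \<and> {a,c} \<in> E"
proof -
  obtain x y z where h: "{a,b,c} = {x,y,z}" "x \<noteq> y" "y \<noteq> z" "x \<noteq> z"
    "{x,y} \<in> E" "{y,z} \<in> E" "{x,z} \<in> E"
    using bspec[OF triF[OF assms(1)] assms(2)] by blast
  have "a \<in> {a,b,c}" "b \<in> {a,b,c}" "c \<in> {a,b,c}" by simp_all
  then have "a \<in> {x,y,z}" "b \<in> {x,y,z}" "c \<in> {x,y,z}" unfolding h(1) .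
  have E3: "{y,x} \<in> E" "{z,y} \<in> E" "{z,x} \<in> E" using h(5-7) by (simp_all add: insert_commute)
  have pq: "{p,q} \<in> E" if "p \<in> {x,y,z}" "q \<in> {x,y,z}" "p \<noteq> q" for p q
    using that h(5-7) E3 by (elim insertE emptyE) simp_all
  show ?thesis using pq \<open>a \<in> {x,y,z}\<close> \<open>b \<in> {x,y,z}\<close> \<open>c \<in> {x,y,z}\<close> assms(3-5) by blast
qed

lemma tri_card:
  assumes "is_triangulation V E F" "e \<in> E"
  shows "card {f\<in>F. e \<subseteq> f} = 2"
  using triC[OF assms(1)] assms(2) by blast

lemma tri_three:
  assumes "is_triangulation V E F" "e \<in> E" "f1 \<in> F" "f2 \<in> F" "f3 \<in> F"
    "e \<subseteq> f1" "e \<subseteq> f2" "e \<subseteq> f3"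
  shows "f1 = f2 \<or> f1 = f3 \<or> f2 = f3"
proof (rule ccontr)
  assume n: "\<not> ?thesis"
  let ?S = "{f\<in>F. e \<subseteq> f}"
  have c: "card ?S = 2" using tri_card[OF assms(1,2)] .
  then have fin: "finite ?S" by (metis card.infinite zero_neq_numeral)
  have "{f1,f2,f3} \<subseteq> ?S" using assms by auto
  then have "card {f1,f2,f3} \<le> 2" using card_mono[OF fin] c by metis
  moreover have "card {f1,f2,f3} = 3" using n by auto
  ultimately show False by simp
qed

lemma good4_d_unique:
  assumes "is_triangulation V E F" "good4 F a b c d" "good4 F a b c d'"
  shows "d = d'"
proof -
  have e: "{b,c} \<in> E" using tri_F[OF assms(1)] assms(2) unfolding good4_def by blast
  have "{a,b,c} = {b,c,d} \<or> {a,b,c} = {b,c,d'} \<or> {b,c,d} = {b,c,d'}"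
    using tri_three[OF assms(1) e, of "{a,b,c}" "{b,c,d}" "{b,c,d'}"] assms(2,3)
    unfolding good4_def by auto
  moreover have "{a,b,c} \<noteq> {b,c,d}" "{a,b,c} \<noteq> {b,c,d'}"
    using assms(2,3) unfolding good4_def by (metis insertCI insertE singletonD)+
  ultimately have "{b,c,d} = {b,c,d'}" by blast
  then show ?thesis using assms(2,3) unfolding good4_def by (metis insertCI insertE singletonD)
qed

lemma good4_a_unique:
  assumes "is_triangulation V E F" "good4 F a b c d" "good4 F a' b c d"
  shows "a = a'"
proof -
  have e: "{b,c} \<in> E" using tri_F[OF assms(1)] assms(2) unfolding good4_def by blast
  have "{a,b,c} = {a',b,c} \<or> {a,b,c} = {b,c,d} \<or> {a',b,c} = {b,c,d}"
    using tri_three[OF assms(1) e, of "{a,b,c}" "{a',b,c}" "{b,c,d}"] assms(2,3)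
    unfolding good4_def by auto
  moreover have "{a,b,c} \<noteq> {b,c,d}" "{a',b,c} \<noteq> {b,c,d}"
    using assms(2,3) unfolding good4_def by (metis insertCI insertE singletonD)+
  ultimately have "{a,b,c} = {a',b,c}" by blast
  then show ?thesis using assms(2,3) unfolding good4_def by (metis insertCI insertE singletonD)
qed

lemma card3_eq:
  assumes "b \<noteq> c" "c \<noteq> d" "b \<noteq> d" "x \<noteq> y" "y \<noteq> z" "x \<noteq> z" "{b,c,d} \<subseteq> {x,y,z}"
  shows "{b,c,d} = {x,y,z}"
  by (rule card_subset_eq) (use assms in auto)

lemma good4_ex:
  assumes "is_triangulation V E F" "{a,b,c} \<in> F" "a \<noteq> b" "b \<noteq> c" "a \<noteq> c"
  shows "\<exists>d. good4 F a b c d"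
proof -
  have e: "{b,c} \<in> E" using tri_F[OF assms] by blast
  define S where "S = {f\<in>F. {b,c} \<subseteq> f}"
  have c: "card S = 2" using tri_card[OF assms(1) e] unfolding S_def .
  then have fin: "finite S" by (metis card.infinite zero_neq_numeral)
  have "S - {{a,b,c}} \<noteq> {}"
  proof
    assume "S - {{a,b,c}} = {}"
    then have "S \<subseteq> {{a,b,c}}" by (simp only: Diff_eq_empty_iff)
    then have "card S \<le> card {{a,b,c}}" by (rule card_mono[rotated]) simp
    then show False using c by simp
  qed
  then obtain g where "g \<in> S - {{a,b,c}}" by (meson ex_in_conv)
  then have g: "g \<in> F" "{b,c} \<subseteq> g" "g \<noteq> {a,b,c}" unfolding S_def by simp_all
  obtain x y z where h: "g = {x,y,z}" "x \<noteq> y" "y \<noteq> z" "x \<noteq> z"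
    using bspec[OF triF[OF assms(1)] g(1)] by blast
  have cg: "card g = 3" using h by simp
  have "\<not> g \<subseteq> {b,c}"
  proof
    assume "g \<subseteq> {b,c}"
    then have "card g \<le> card {b,c}" by (rule card_mono[rotated]) simp
    then show False using cg assms by simp
  qed
  then obtain d where d: "d \<in> g" "d \<notin> {b,c}" unfolding subset_iff by blast
  have sub: "{b,c,d} \<subseteq> {x,y,z}" using g(2) d(1) unfolding h(1) by simp
  have gd: "{b,c,d} = g" unfolding h(1) by (rule card3_eq) (use h d assms sub in auto)
  have "d \<noteq> a"
  proof
    assume "d = a"
    then have "g = {b,c,a}" using gd by simp
    also have "{b,c,a} = {a,b,c}" by blast
    finally show False using g(3) by simp
  qed
  then have "good4 F a b c d" unfolding good4_def using assms gd g(1) d(2) by simp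
  then show ?thesis by blast
qed

lemma zz_good4:
  assumes "is_zigzag_seq E F v"
  shows "good4 F (v i) (v (i+1)) (v (i+2)) (v (i+3))"
proof -
  have D: "{v j, v (j+1)} \<inter> {v (j+2), v (j+3)} = {}" for j
  proof -
    have "{v j, v (j+1)} \<inter> {v (j+2), v (j+2+1)} = {}"
      using assms unfolding is_zigzag_seq_def Let_def by blast
    moreover have "j+2+1 = j+3" by simp
    ultimately show ?thesis by (simp only:)
  qed
  have A: "adjacent_faces E F ({v j, v (j+1)} \<union> {v (j+1), v (j+2)})
        ({v (j+1), v (j+2)} \<union> {v (j+2), v (j+3)})" for j
  proof -
    have "adjacent_faces E F ({v j, v (j+1)} \<union> {v (j+1), v (j+1+1)})
        ({v (j+1), v (j+1+1)} \<union> {v (j+2), v (j+2+1)})"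
      using assms unfolding is_zigzag_seq_def Let_def by blast
    moreover have "j+2+1 = j+3" "j+1+1 = j+2" by simp_all
    ultimately show ?thesis by (simp only:)
  qed
  have b: "{v (i+1), v (i+2)} \<inter> {v (i+3), v (i+4)} = {}"
  proof -
    have "i+1+1 = i+2" "i+1+2 = i+3" "i+1+3 = i+4" by simp_all
    then show ?thesis using D[of "i+1"] by (simp only:)
  qed
  have c: "{v (i-1), v i} \<inter> {v (i+1), v (i+2)} = {}"
  proof -
    have "i-1+1 = i" "i-1+2 = i+1" "i-1+3 = i+2" by simp_all
    then show ?thesis using D[of "i-1"] by (simp only:)
  qed
  have "{v i, v (i+1)} \<union> {v (i+1), v (i+2)} = {v i, v (i+1), v (i+2)}" by auto
  moreover have "{v (i+1), v (i+2)} \<union> {v (i+2), v (i+3)} = {v (i+1), v (i+2), v (i+3)}" by auto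
  ultimately have "{v i, v (i+1), v (i+2)} \<in> F" "{v (i+1), v (i+2), v (i+3)} \<in> F"
    using A[of i] unfolding adjacent_faces_def by simp_all
  moreover have "v i \<noteq> v (i+1)" using c by blast
  moreover have "v (i+1) \<noteq> v (i+2)" "v i \<noteq> v (i+2)" "v (i+3) \<noteq> v i" "v (i+3) \<noteq> v (i+1)"
    using D[of i] by blast+
  moreover have "v (i+3) \<noteq> v (i+2)" using b by blast
  ultimately show ?thesis unfolding good4_def by blast
qed

lemma good4_local:
  assumes "is_triangulation V E F" "good4 F a b c d"
  shows "adjacent_edges E F {a,b} {b,c} \<and> adjacent_faces E F ({a,b} \<union> {b,c}) ({b,c} \<union> {c,d})
     \<and> {a,b} \<inter> {c,d} = {}"
proof -
  have g: "{a,b,c} \<in> F" "{b,c,d} \<in> F" "a \<noteq> b" "b \<noteq> c" "a \<noteq> c" "d \<noteq> a" "d \<noteq> b" "d \<noteq> c"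
    using assms(2) unfolding good4_def by simp_all
  have E1: "{a,b} \<in> E" "{b,c} \<in> E" using tri_F[OF assms(1) g(1,3,4,5)] by simp_all
  have U1: "{a,b} \<union> {b,c} = {a,b,c}" by auto
  have U2: "{b,c} \<union> {c,d} = {b,c,d}" by auto
  have I: "{a,b,c} \<inter> {b,c,d} = {b,c}" using g by auto
  have ne: "{a,b,c} \<noteq> {b,c,d}"
  proof
    assume "{a,b,c} = {b,c,d}"
    moreover have "a \<in> {a,b,c}" by simp
    ultimately have "a \<in> {b,c,d}" by simp
    then show False using g by simp
  qed
  have ne2: "{a,b} \<noteq> {b,c}"
  proof
    assume "{a,b} = {b,c}"
    moreover have "a \<in> {a,b}" by simp
    ultimately have "a \<in> {b,c}" by simp
    then show False using g by simp
  qed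
  have s1: "{a,b} \<subseteq> {a,b,c}" "{b,c} \<subseteq> {a,b,c}" by auto
  have dj: "{a,b} \<inter> {c,d} = {}" using g by auto
  have ae: "adjacent_edges E F {a,b} {b,c}"
    unfolding adjacent_edges_def using E1 ne2 s1 g(1) by blast
  have af: "adjacent_faces E F ({a,b} \<union> {b,c}) ({b,c} \<union> {c,d})"
    unfolding adjacent_faces_def U1 U2 I using g(1,2) ne E1(2) by simp
  show ?thesis using ae af dj by simp
qed

lemma good4_zz:
  assumes "is_triangulation V E F" "\<And>i. good4 F (v i) (v (i+1)) (v (i+2)) (v (i+3))"
  shows "is_zigzag_seq E F v"
  unfolding is_zigzag_seq_def Let_def
proof
  fix i
  have g2: "i+1+1 = i+(2::int)" "i+2+1 = i+(3::int)" by simp_all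
  show "adjacent_edges E F {v i, v (i + 1)} {v (i + 1), v (i + 1 + 1)} \<and>
         adjacent_faces E F ({v i, v (i + 1)} \<union> {v (i + 1), v (i + 1 + 1)})
          ({v (i + 1), v (i + 1 + 1)} \<union> {v (i + 2), v (i + 2 + 1)}) \<and>
         {v i, v (i + 1)} \<inter> {v (i + 2), v (i + 2 + 1)} = {}"
    unfolding g2 by (rule good4_local[OF assms(1) assms(2)])
qed



definition G3 :: "'a set set \<Rightarrow> ('a \<times> 'a \<times> 'a) set" where
  "G3 F = {(a,b,c). {a,b,c} \<in> F \<and> a \<noteq> b \<and> b \<noteq> c \<and> a \<noteq> c}"

definition nxt :: "'a set set \<Rightarrow> 'a \<times> 'a \<times> 'a \<Rightarrow> 'a \<times> 'a \<times> 'a" where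
  "nxt F t = (case t of (a,b,c) \<Rightarrow> (b, c, SOME d. good4 F a b c d))"

lemma nxt_good:
  assumes "is_triangulation V E F" "t \<in> G3 F"
  shows "good4 F (fst t) (fst (snd t)) (snd (snd t)) (snd (snd (nxt F t)))
    \<and> fst (nxt F t) = fst (snd t) \<and> fst (snd (nxt F t)) = snd (snd t)"
proof -
  obtain a b c where t: "t = (a,b,c)" by (cases t) blast
  have h: "{a,b,c} \<in> F" "a \<noteq> b" "b \<noteq> c" "a \<noteq> c" using assms(2) unfolding t G3_def by simp_all
  have "good4 F a b c (SOME d. good4 F a b c d)" using good4_ex[OF assms(1) h] by (rule someI_ex)
  then show ?thesis unfolding t nxt_def by simp
qed

lemma nxt_G:
  assumes "is_triangulation V E F" "t \<in> G3 F"
  shows "nxt F t \<in> G3 F"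
proof -
  obtain a b c where t: "t = (a,b,c)" by (cases t) blast
  obtain d where n: "nxt F t = (b,c,d)" unfolding t nxt_def by simp
  have "good4 F a b c d" using nxt_good[OF assms] n t by simp
  then show ?thesis unfolding n G3_def good4_def by auto
qed

lemma nxt_inj:
  assumes "is_triangulation V E F"
  shows "inj_on (nxt F) (G3 F)"
proof
  fix t t' assume tt: "t \<in> G3 F" "t' \<in> G3 F" "nxt F t = nxt F t'"
  obtain a b c where t: "t = (a,b,c)" by (cases t) blast
  obtain a' b' c' where t': "t' = (a',b',c')" by (cases t') blast
  obtain d where n: "nxt F t = (b,c,d)" unfolding t nxt_def by simp
  obtain d' where n': "nxt F t' = (b',c',d')" unfolding t' nxt_def by simp
  have e: "b = b'" "c = c'" "d = d'" using tt(3) n n' by simp_all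
  have "good4 F a b c d" using nxt_good[OF assms tt(1)] n t by simp
  moreover have "good4 F a' b c d" using nxt_good[OF assms tt(2)] n' t' e by simp
  ultimately have "a = a'" by (rule good4_a_unique[OF assms])
  then show "t = t'" using t t' e by simp
qed

lemma G3_fin:
  assumes "is_triangulation V E F"
  shows "finite (G3 F)"
proof (rule finite_subset)
  show "G3 F \<subseteq> V \<times> V \<times> V"
  proof
    fix t assume "t \<in> G3 F"
    then obtain a b c where t: "t = (a,b,c)" "{a,b,c} \<in> F" "a \<noteq> b" "b \<noteq> c" "a \<noteq> c"
      unfolding G3_def by blast
    have "{a,b} \<in> E" "{b,c} \<in> E" using tri_F[OF assms t(2-5)] by simp_all
    then have "a \<in> V" "b \<in> V" "c \<in> V" using tri_E[OF assms] by blast+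
    then show "t \<in> V \<times> V \<times> V" using t by simp
  qed
  show "finite (V \<times> V \<times> V)" using triFin[OF assms] by simp
qed

lemma funpow_G:
  assumes "is_triangulation V E F" "t \<in> G3 F"
  shows "(nxt F ^^ n) t \<in> G3 F"
  by (induction n) (simp_all add: assms nxt_G[OF assms(1)])

lemma funpow_cancel:
  assumes "is_triangulation V E F" "t \<in> G3 F"
  shows "(nxt F ^^ m) t = (nxt F ^^ (m + k)) t \<Longrightarrow> t = (nxt F ^^ k) t"
proof (induction m)
  case 0
  then show ?case by simp
next
  case (Suc m)
  have "nxt F ((nxt F ^^ m) t) = nxt F ((nxt F ^^ (m + k)) t)" using Suc.prems by simp
  then have "(nxt F ^^ m) t = (nxt F ^^ (m + k)) t"
    using inj_onD[OF nxt_inj[OF assms(1)]] funpow_G[OF assms] by blast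
  then show ?case by (rule Suc.IH)
qed

lemma period:
  assumes "is_triangulation V E F" "t \<in> G3 F"
  shows "\<exists>p>0. (nxt F ^^ p) t = t"
proof -
  let ?f = "\<lambda>n. (nxt F ^^ n) t"
  let ?N = "card (G3 F)"
  have "\<not> inj_on ?f {0..?N}"
  proof
    assume "inj_on ?f {0..?N}"
    moreover have "?f ` {0..?N} \<subseteq> G3 F" using funpow_G[OF assms] by blast
    ultimately have "card {0..?N} \<le> ?N" using card_inj_on_le G3_fin[OF assms(1)] by blast
    then show False by simp
  qed
  then obtain m n where mn: "m \<noteq> n" "?f m = ?f n" unfolding inj_on_def by blast
  show ?thesis
  proof (cases "m < n")
    case True
    have "t = (nxt F ^^ (n - m)) t"
      using funpow_cancel[OF assms, of m "n - m"] mn True by simp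
    then show ?thesis using True by (intro exI[of _ "n - m"]) simp
  next
    case False
    then have "n < m" using mn by simp
    have "t = (nxt F ^^ (m - n)) t"
      using funpow_cancel[OF assms, of n "m - n"] mn \<open>n < m\<close> by simp
    then show ?thesis using \<open>n < m\<close> by (intro exI[of _ "m - n"]) simp
  qed
qed

lemma zz_exists:
  assumes "is_triangulation V E F" "(x,y,z) \<in> G3 F"
  shows "\<exists>s p. is_zigzag_seq E F s \<and> p > 0 \<and> (\<forall>i. s (i + int p) = s i)
     \<and> s 0 = x \<and> s 1 = y \<and> s 2 = z"
proof -
  define t where "t = (x,y,z)"
  have tG: "t \<in> G3 F" using assms(2) t_def by simp
  obtain p where p: "p > 0" "(nxt F ^^ p) t = t" using period[OF assms(1) tG] by blast
  define T where "T i = (nxt F ^^ nat (i mod int p)) t" for i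
  define s where "s i = fst (T i)" for i
  have TG: "T i \<in> G3 F" for i unfolding T_def by (rule funpow_G[OF assms(1) tG])
  have Tstep: "T (i+1) = nxt F (T i)" for i
  proof -
    define r where "r = i mod int p"
    have r: "0 \<le> r" "r < int p" using p(1) unfolding r_def by simp_all
    have m1: "(i+1) mod int p = (r + 1) mod int p" unfolding r_def by (simp add: mod_add_left_eq)
    show ?thesis
    proof (cases "r + 1 < int p")
      case True
      then have "(i+1) mod int p = r + 1" using m1 r by simp
      then have "nat ((i+1) mod int p) = Suc (nat r)" using r by simp
      then show ?thesis unfolding T_def r_def[symmetric] by simp
    next
      case False
      then have "r + 1 = int p" using r by simp
      then have "(i+1) mod int p = 0" using m1 by simp
      then have "T (i+1) = t" unfolding T_def by simp
      moreover have "Suc (nat r) = p" using \<open>r + 1 = int p\<close> r by simp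
      then have "nxt F (T i) = (nxt F ^^ p) t" unfolding T_def r_def[symmetric]
        by (metis comp_apply funpow.simps(2))
      ultimately show ?thesis using p(2) by simp
    qed
  qed
  have s1: "s (i+1) = fst (snd (T i))" for i
    unfolding s_def Tstep using nxt_good[OF assms(1) TG] by simp
  have s2: "s (i+2) = snd (snd (T i))" for i
  proof -
    have "s (i+2) = s ((i+1)+1)" by (simp add: add.assoc)
    also have "\<dots> = fst (snd (T (i+1)))" by (rule s1)
    also have "\<dots> = snd (snd (T i))" unfolding Tstep using nxt_good[OF assms(1) TG] by simp
    finally show ?thesis .
  qed
  have s3: "s (i+3) = snd (snd (nxt F (T i)))" for i
  proof -
    have "s (i+3) = s ((i+1)+2)" by (simp add: add.assoc)
    also have "\<dots> = snd (snd (T (i+1)))" by (rule s2)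
    finally show ?thesis unfolding Tstep .
  qed
  have "good4 F (s i) (s (i+1)) (s (i+2)) (s (i+3))" for i
    unfolding s1 s2 s3 using nxt_good[OF assms(1) TG] unfolding s_def by simp
  then have zz: "is_zigzag_seq E F s" by (rule good4_zz[OF assms(1)])
  have per: "s (i + int p) = s i" for i unfolding s_def T_def by simp
  have T0: "T 0 = t" unfolding T_def by simp
  have "s 0 = x" unfolding s_def T0 t_def by simp
  moreover have "s 1 = y" using s1[of 0] unfolding T0 t_def by simp
  moreover have "s 2 = z" using s2[of 0] unfolding T0 t_def by simp
  ultimately show ?thesis using zz per p(1) by blast
qed



lemma per_nat:
  assumes "\<forall>i. w (i + int P) = w i"
  shows "w (i + int n * int P) = w i"
proof (induction n arbitrary: i)
  case 0 then show ?case by simp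
next
  case (Suc n)
  have "w (i + int (Suc n) * int P) = w ((i + int n * int P) + int P)" by (simp add: algebra_simps)
  also have "\<dots> = w (i + int n * int P)" using assms by blast
  finally show ?case using Suc.IH by simp
qed

lemma per_int:
  assumes "\<forall>i. w (i + int P) = w i"
  shows "w (i + m * int P) = w i"
proof (cases "m \<ge> 0")
  case True
  then have "m = int (nat m)" by simp
  then show ?thesis using per_nat[OF assms, of i "nat m"] by metis
next
  case False
  define n where "n = nat (- m)"
  have m: "m = - int n" using False unfolding n_def by simp
  have "w (i + m * int P) = w ((i + m * int P) + int n * int P)" using per_nat[OF assms] by metis
  also have "(i + m * int P) + int n * int P = i" unfolding m by (simp add: algebra_simps)
  finally show ?thesis .
qed

lemma ztrav_pos:
  assumes "\<forall>i. u (i + int p) = u i" "p > 0" "u j = a" "u (j+1) = b"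
  shows "ztrav (zclass u) a b > 0"
proof -
  define w where "w = (SOME w. w \<in> zclass u)"
  have "u \<in> zclass u" unfolding zclass_def by (rule range_eqI[of _ _ 0]) simp
  then have "w \<in> zclass u" unfolding w_def by (rule someI[of "\<lambda>w. w \<in> zclass u" u])
  then obtain k where k: "w = (\<lambda>i. u (i + k))" unfolding zclass_def by blast
  have wp: "\<forall>i. w (i + int p) = w i" unfolding k using assms(1) by (simp add: algebra_simps)
    (metis add.commute add.left_commute)
  define P where "P = zper w"
  have PP: "P > 0 \<and> (\<forall>i. w (i + int P) = w i)"
    unfolding P_def zper_def by (rule LeastI[of _ p]) (use wp assms(2) in simp)
  define j' where "j' = (j - k) mod int P"
  have j'r: "0 \<le> j'" "j' < int P" using PP unfolding j'_def by simp_all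
  have jj: "j' + ((j - k) div int P) * int P = j - k" unfolding j'_def by (rule mod_div_mult_eq)
  have "w j' = w (j - k)" using per_int[of w P j' "(j - k) div int P"] PP jj by simp
  also have "\<dots> = a" unfolding k using assms(3) by simp
  finally have wa: "w j' = a" .
  have "w (j' + 1) = w (j' + 1 + ((j - k) div int P) * int P)" using per_int[of w P] PP by metis
  also have "j' + 1 + ((j - k) div int P) * int P = j - k + 1" using jj by simp
  also have "w (j - k + 1) = b" unfolding k using assms(4) by (simp add: algebra_simps)
  finally have wb: "w (j' + 1) = b" .
  have "j' \<in> {i \<in> {0..<int P}. w i = a \<and> w (i + 1) = b}" using j'r wa wb by simp
  moreover have "finite {i \<in> {0..<int P}. w i = a \<and> w (i + 1) = b}"
    by (rule finite_subset[of _ "{0..<int P}"]) auto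
  ultimately have "card {i \<in> {0..<int P}. w i = a \<and> w (i + 1) = b} > 0"
    by (metis card_gt_0_iff empty_iff)
  then show ?thesis unfolding ztrav_def Let_def w_def[symmetric] P_def[symmetric] .
qed

lemma zinv_zclass: "zinv (zclass s) = zclass (\<lambda>i. s (- i))"
proof -
  have su: "range (uminus :: int \<Rightarrow> int) = UNIV" by (rule surjI[of _ uminus]) simp
  have "zinv (zclass s) = range (\<lambda>k i. s (- i + k))"
    unfolding zinv_def zclass_def image_comp by (simp add: comp_def)
  also have "\<dots> = (\<lambda>k i. s (- i + k)) ` range uminus" using su by simp
  also have "\<dots> = range (\<lambda>k i. s (- (i + k)))" unfolding image_comp by (simp add: comp_def algebra_simps)
  also have "\<dots> = zclass (\<lambda>i. s (- i))" unfolding zclass_def by simp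
  finally show ?thesis .
qed

lemma zz_det:
  assumes "is_triangulation V E F" "is_zigzag_seq E F v" "is_zigzag_seq E F w"
    "v 0 = w 0" "v 1 = w 1" "v 2 = w 2"
  shows "v = w"
proof -
  have fw: "v (int n) = w (int n) \<and> v (int n + 1) = w (int n + 1) \<and> v (int n + 2) = w (int n + 2)" for n
  proof (induction n)
    case 0 then show ?case using assms by simp
  next
    case (Suc n)
    define i where "i = int n"
    have g1: "good4 F (v i) (v (i+1)) (v (i+2)) (v (i+3))" by (rule zz_good4[OF assms(2)])
    have "good4 F (w i) (w (i+1)) (w (i+2)) (w (i+3))" by (rule zz_good4[OF assms(3)])
    then have g2: "good4 F (v i) (v (i+1)) (v (i+2)) (w (i+3))" using Suc.IH unfolding i_def by simp
    have "v (i+3) = w (i+3)" by (rule good4_d_unique[OF assms(1) g1 g2])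
    then show ?case using Suc.IH unfolding i_def by (simp add: algebra_simps)
  qed
  have bw: "v (- int n) = w (- int n) \<and> v (- int n + 1) = w (- int n + 1) \<and> v (- int n + 2) = w (- int n + 2)" for n
  proof (induction n)
    case 0 then show ?case using assms by simp
  next
    case (Suc n)
    define i where "i = - int n - 1"
    have e: "i + 1 = - int n" "i + 2 = - int n + 1" "i + 3 = - int n + 2" "- int (Suc n) = i"
      "- int (Suc n) + 1 = - int n" "- int (Suc n) + 2 = - int n + 1"
      unfolding i_def by simp_all
    have g1: "good4 F (v i) (v (i+1)) (v (i+2)) (v (i+3))" by (rule zz_good4[OF assms(2)])
    have "good4 F (w i) (w (i+1)) (w (i+2)) (w (i+3))" by (rule zz_good4[OF assms(3)])
    then have g2: "good4 F (w i) (v (i+1)) (v (i+2)) (v (i+3))" using Suc.IH unfolding e by simp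
    have "v i = w i" by (rule good4_a_unique[OF assms(1) g1 g2])
    then have "v (- int n - 1) = w (- int n - 1)" unfolding i_def .
    moreover have "- int n - 1 = -1 - int n" by simp
    ultimately have "v (-1 - int n) = w (-1 - int n)" by metis
    then show ?case using Suc.IH by (simp add: algebra_simps)
  qed
  show ?thesis
  proof
    fix i :: int
    show "v i = w i"
    proof (cases "i \<ge> 0")
      case True
      then have "i = int (nat i)" by simp
      then show ?thesis using fw[of "nat i"] by metis
    next
      case False
      then have "i = - int (nat (- i))" by simp
      then show ?thesis using bw[of "nat (- i)"] by metis
    qed
  qed
qed

lemma zz_V:
  assumes "is_triangulation V E F" "is_zigzag_seq E F v"
  shows "v i \<in> V"
proof -
  have g: "good4 F (v i) (v (i+1)) (v (i+2)) (v (i+3))" by (rule zz_good4[OF assms(2)])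
  then have "{v i, v (i+1)} \<in> E" using tri_F[OF assms(1), of "v i" "v (i+1)" "v (i+2)"]
    unfolding good4_def by simp
  then show ?thesis using tri_E[OF assms(1)] by blast
qed

lemma zz_fin:
  assumes "is_triangulation V E F"
  shows "finite (zigzags E F)"
proof -
  let ?A = "{v. is_zigzag_seq E F v}"
  let ?f = "\<lambda>v::int \<Rightarrow> _. (v 0, v 1, v 2)"
  have "inj_on ?f ?A"
    by (rule inj_onI) (use zz_det[OF assms] in auto)
  moreover have "?f ` ?A \<subseteq> V \<times> V \<times> V" using zz_V[OF assms] by auto
  then have "finite (?f ` ?A)" using triFin[OF assms] by (meson finite_SigmaI finite_subset)
  ultimately have "finite ?A" using finite_imageD by blast
  moreover have "zigzags E F = zclass ` ?A" unfolding zigzags_def by blast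
  ultimately show ?thesis by simp
qed



lemma trav_pos:
  assumes "is_triangulation V E F" "z_orientation E F \<tau>" "Z \<in> \<tau>" "ztrav Z a b > 0"
  shows "trav \<tau> a b > 0"
proof -
  have "finite \<tau>" using assms(2) zz_fin[OF assms(1)] unfolding z_orientation_def
    by (meson finite_subset)
  then have "ztrav Z a b \<le> trav \<tau> a b" unfolding trav_def using assms(3)
    by (intro member_le_sum) simp_all
  then show ?thesis using assms(4) by simp
qed

lemma face_dir:
  assumes "is_triangulation V E F" "z_orientation E F \<tau>" "(x,y,z) \<in> G3 F"
  shows "(trav \<tau> x y > 0 \<and> trav \<tau> y z > 0) \<or> (trav \<tau> y x > 0 \<and> trav \<tau> z y > 0)"
proof -
  obtain s p where sp: "is_zigzag_seq E F s" "p > 0" "\<forall>i. s (i + int p) = s i"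
    "s 0 = x" "s 1 = y" "s 2 = z"
    using zz_exists[OF assms(1,3)] by blast
  have Zin: "zclass s \<in> zigzags E F" unfolding zigzags_def using sp(1) by blast
  then have "zclass s \<in> \<tau> \<or> zinv (zclass s) \<in> \<tau>" using assms(2) unfolding z_orientation_def by blast
  then show ?thesis
  proof
    assume "zclass s \<in> \<tau>"
    moreover have "ztrav (zclass s) x y > 0" by (rule ztrav_pos[of s p 0]) (use sp in simp_all)
    moreover have "ztrav (zclass s) y z > 0" by (rule ztrav_pos[of s p 1]) (use sp in simp_all)
    ultimately show ?thesis using trav_pos[OF assms(1,2)] by blast
  next
    assume "zinv (zclass s) \<in> \<tau>"
    then have r: "zclass (\<lambda>i. s (- i)) \<in> \<tau>" unfolding zinv_zclass .
    have rp: "\<forall>i. s (- (i + int p)) = s (- i)"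
    proof
      fix i
      have "s (- i) = s ((- (i + int p)) + int p)" by simp
      then show "s (- (i + int p)) = s (- i)" using sp(3) by metis
    qed
    have "ztrav (zclass (\<lambda>i. s (- i))) y x > 0"
      by (rule ztrav_pos[of _ p "-1"]) (use sp rp in simp_all)
    moreover have "ztrav (zclass (\<lambda>i. s (- i))) z y > 0"
      by (rule ztrav_pos[of _ p "-2"]) (use sp rp in simp_all)
    ultimately show ?thesis using trav_pos[OF assms(1,2) r] by blast
  qed
qed

lemma tarc_intro:
  assumes "is_triangulation V E F" "{a,b} \<in> E" "trav \<tau> a b > 0"
  shows "tarc E \<tau> a b"
proof -
  have fin1: "finite {y. typeI E \<tau> a y}"
    by (rule finite_subset[OF _ triFin[OF assms(1)]]) (use tri_E[OF assms(1)] in \<open>auto simp: typeI_def\<close>)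
  have fin2: "finite {y. typeII E \<tau> a y}"
    by (rule finite_subset[OF _ triFin[OF assms(1)]]) (use tri_E[OF assms(1)] in \<open>auto simp: typeII_def\<close>)
  show ?thesis
  proof (cases "trav \<tau> b a > 0")
    case True
    then have t: "typeI E \<tau> a b" using assms unfolding typeI_def by simp
    then have "card {y. typeI E \<tau> a y} > 0" using fin1 by (metis card_gt_0_iff empty_iff mem_Collect_eq)
    then have "tdeg E \<tau> a > 0" unfolding tdeg_def by simp
    then show ?thesis using t unfolding tarc_def tprob_def by simp
  next
    case False
    then have t: "typeII E \<tau> a b" "\<not> typeI E \<tau> a b" using assms unfolding typeII_def typeI_def by simp_all
    then have "card {y. typeII E \<tau> a y} > 0" using fin2 by (metis card_gt_0_iff empty_iff mem_Collect_eq)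
    then have "tdeg E \<tau> a > 0" unfolding tdeg_def by simp
    then show ?thesis using t unfolding tarc_def tprob_def by simp
  qed
qed

lemma tarc_edge:
  assumes "tarc E \<tau> a b"
  shows "{a,b} \<in> E"
  using assms unfolding tarc_def tprob_def typeI_def typeII_def by (auto split: if_splits)

lemma tprob_nonneg: "tprob E \<tau> a b \<ge> 0"
  unfolding tprob_def by simp

lemma face_cycle:
  assumes "is_triangulation V E F" "z_orientation E F \<tau>" "(x,y,z) \<in> G3 F"
  shows "(tarc E \<tau> x y \<and> tarc E \<tau> y z \<and> tarc E \<tau> z x) \<or> (tarc E \<tau> x z \<and> tarc E \<tau> z y \<and> tarc E \<tau> y x)"
proof -
  have h: "{x,y,z} \<in> F" "x \<noteq> y" "y \<noteq> z" "x \<noteq> z" using assms(3) unfolding G3_def by simp_all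
  have "{y,z,x} = {x,y,z}" "{z,x,y} = {x,y,z}" by auto
  then have g2: "(y,z,x) \<in> G3 F" "(z,x,y) \<in> G3 F" using h unfolding G3_def by auto
  have e: "{x,y} \<in> E" "{y,z} \<in> E" "{x,z} \<in> E" using tri_F[OF assms(1) h] by simp_all
  have e2: "{y,x} \<in> E" "{z,y} \<in> E" "{z,x} \<in> E" using e by (simp_all add: insert_commute)
  note T = tarc_intro[OF assms(1)]
  have d1: "(trav \<tau> x y > 0 \<and> trav \<tau> y z > 0) \<or> (trav \<tau> y x > 0 \<and> trav \<tau> z y > 0)"
    by (rule face_dir[OF assms])
  have d2: "(trav \<tau> y z > 0 \<and> trav \<tau> z x > 0) \<or> (trav \<tau> z y > 0 \<and> trav \<tau> x z > 0)"
    by (rule face_dir[OF assms(1,2) g2(1)])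
  have d3: "(trav \<tau> z x > 0 \<and> trav \<tau> x y > 0) \<or> (trav \<tau> x z > 0 \<and> trav \<tau> y x > 0)"
    by (rule face_dir[OF assms(1,2) g2(2)])
  have "(trav \<tau> x y > 0 \<and> trav \<tau> y z > 0 \<and> trav \<tau> z x > 0) \<or>
        (trav \<tau> x z > 0 \<and> trav \<tau> z y > 0 \<and> trav \<tau> y x > 0)"
    using d1 d2 d3 by blast
  then show ?thesis using T e e2 by blast
qed

lemma tri_reach:
  assumes "C x y" "C y z" "C z x" "p \<in> {x,y,z}" "q \<in> {x,y,z}"
  shows "C\<^sup>*\<^sup>* p q"
proof -
  have a: "C\<^sup>*\<^sup>* x y" "C\<^sup>*\<^sup>* y z" "C\<^sup>*\<^sup>* z x" using assms(1-3) by auto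
  have b: "C\<^sup>*\<^sup>* x z" "C\<^sup>*\<^sup>* y x" "C\<^sup>*\<^sup>* z y" using a by (meson rtranclp_trans)+
  show ?thesis using assms(4,5) a b by (elim insertE emptyE) auto
qed

lemma mpow_nonneg:
  assumes "\<And>a b. P a b \<ge> 0"
  shows "mpow V P n x y \<ge> 0"
  by (induction n arbitrary: y) (auto intro!: sum_nonneg mult_nonneg_nonneg assms)

lemma mpow_pos:
  assumes "finite V" "\<And>a b. P a b \<ge> 0" "(\<lambda>a b. a \<in> V \<and> P a b > 0)\<^sup>*\<^sup>* x y"
  shows "\<exists>n. mpow V P n x y > 0"
  using assms(3)
proof (induction rule: rtranclp_induct)
  case base
  then show ?case by (intro exI[of _ 0]) simp
next
  case (step z y)
  obtain n where n: "mpow V P n x z > 0" using step.IH by blast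
  have "mpow V P n x z * P z y > 0" using n step.hyps(2) by simp
  also have "mpow V P n x z * P z y \<le> (\<Sum>w\<in>V. mpow V P n x w * P w y)"
  proof (rule member_le_sum)
    show "z \<in> V" using step.hyps(2) by simp
    show "finite V" by (rule assms(1))
    fix w
    have "mpow V P n x w \<ge> 0" by (rule mpow_nonneg) (rule assms(2))
    then show "0 \<le> mpow V P n x w * P w y" using assms(2) by simp
  qed
  finally show ?case by (intro exI[of _ "Suc n"]) simp
qed

theorem proposition1:
  fixes V :: "'a set" and E F :: "'a set set" and \<tau> :: "(int \<Rightarrow> 'a) set set"
  assumes "is_triangulation V E F"
    and "z_orientation E F \<tau>"
  shows "(\<forall>v\<in>V. \<exists>a b. tarc E \<tau> v a \<and> tarc E \<tau> a b \<and> tarc E \<tau> b v)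
         \<and> irreducible_chain V (tprob E \<tau>)"
proof
  let ?C = "tarc E \<tau>"
  have face: "\<exists>x y z. f = {x,y,z} \<and> (x,y,z) \<in> G3 F" if fF: "f \<in> F" for f
  proof -
    obtain x y z where h: "f = {x,y,z}" "x \<noteq> y" "y \<noteq> z" "x \<noteq> z"
      using bspec[OF triF[OF assms(1)] fF] by blast
    then have "(x,y,z) \<in> G3 F" using fF unfolding G3_def by simp
    then show ?thesis using h by blast
  qed
  show "\<forall>v\<in>V. \<exists>a b. ?C v a \<and> ?C a b \<and> ?C b v"
  proof
    fix v assume "v \<in> V"
    obtain f where f: "f \<in> F" "v \<in> f" using triV[OF assms(1) \<open>v \<in> V\<close>] by blast
    obtain x y z where xyz: "f = {x,y,z}" "(x,y,z) \<in> G3 F" using face[OF f(1)] by blast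
    have v: "v = x \<or> v = y \<or> v = z" using f(2) xyz(1) by simp
    from face_cycle[OF assms xyz(2)] v show "\<exists>a b. ?C v a \<and> ?C a b \<and> ?C b v" by metis
  qed
  have edge: "?C\<^sup>*\<^sup>* a b" if "{a,b} \<in> E" for a b
  proof -
    have "card {f\<in>F. {a,b} \<subseteq> f} = 2" by (rule tri_card[OF assms(1) that])
    then have "{f\<in>F. {a,b} \<subseteq> f} \<noteq> {}" by (metis card.empty zero_neq_numeral)
    then obtain f where f: "f \<in> F" "{a,b} \<subseteq> f" by blast
    obtain x y z where xyz: "f = {x,y,z}" "(x,y,z) \<in> G3 F" using face[OF f(1)] by blast
    have ab: "a \<in> {x,y,z}" "b \<in> {x,y,z}" using f(2) xyz(1) by auto
    have ab2: "a \<in> {x,z,y}" "b \<in> {x,z,y}" using ab by auto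
    from face_cycle[OF assms xyz(2)] show ?thesis
    proof
      assume "?C x y \<and> ?C y z \<and> ?C z x"
      then show ?thesis using tri_reach[of ?C x y z] ab by blast
    next
      assume "?C x z \<and> ?C z y \<and> ?C y x"
      then show ?thesis using tri_reach[of ?C x z y] ab2 by blast
    qed
  qed
  have conn: "?C\<^sup>*\<^sup>* a b" if "(\<lambda>a b. {a, b} \<in> E)\<^sup>*\<^sup>* a b" for a b
    using that by (induction rule: rtranclp_induct) (auto intro: rtranclp_trans edge)
  have mono: "(\<lambda>a b. a \<in> V \<and> tprob E \<tau> a b > 0)\<^sup>*\<^sup>* a b" if "?C\<^sup>*\<^sup>* a b" for a b
    using that
  proof (induction rule: rtranclp_induct)
    case base then show ?case by simp
  next
    case (step y z)
    have "y \<in> V" using tarc_edge[OF step.hyps(2)] tri_E[OF assms(1)] by blast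
    then have "(\<lambda>a b. a \<in> V \<and> tprob E \<tau> a b > 0) y z" using step.hyps(2) unfolding tarc_def by simp
    then show ?case using step.IH by (rule rtranclp.rtrancl_into_rtrancl[rotated])
  qed
  show "irreducible_chain V (tprob E \<tau>)"
    unfolding irreducible_chain_def
  proof (intro ballI)
    fix x y assume "x \<in> V" "y \<in> V"
    then have "(\<lambda>a b. {a, b} \<in> E)\<^sup>*\<^sup>* x y" using triConn[OF assms(1)] by blast
    then show "\<exists>n. mpow V (tprob E \<tau>) n x y > 0"
      by (intro mpow_pos[OF triFin[OF assms(1)] tprob_nonneg] mono conn)
  qed
qed

end
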